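(* Let $n\ge1$, identify $\mathbb{R}^{n+1}=\mathbb{R}^n\times\mathbb{R}$, let $R>0$, let $K\subset\mathbb{R}^{n+1}$ be the closed ball of radius $R$ centered at the origin, and let $f\colon\mathbb{R}^n\to(0,\infty)$ be continuous with $|x|^2+f(x)^2>R^2$ for all $x\in\mathbb{R}^n$ (so that $K$ is disjoint from the epigraph $L=\{(x,y)\mid f(x)\le y\}$). Then for every $x\in\mathbb{R}^n$ there is exactly one $y\in\mathbb{R}$ such that $d((x,y),K)=d((x,y),L)$.
   Context: $d(p,A)=\inf\{|p-q|\mid q\in A\}$ (Euclidean distance). *)

theory Defs
  imports "HOL-Analysis.Analysis"
begin

end

theory Submission
  imports Defs
begin

lemma infdist_cball0:
  fixes p :: "'a::euclidean_space"
  assumes "R > 0"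
  shows "infdist p (cball 0 R) = max 0 (norm p - R)"
proof (cases "norm p \<le> R")
  case True
  then show ?thesis by (simp add: max_def)
next
  case False
  then have np: "norm p > R" by simp
  have ne: "cball (0::'a) R \<noteq> {}" using assms by auto
  obtain k where k: "k \<in> cball 0 R" "infdist p (cball 0 R) = dist p k"
    using infdist_attains_inf[OF closed_cball ne] by blast
  have "norm k \<le> R" using k(1) by simp
  then have lo: "infdist p (cball 0 R) \<ge> norm p - R"
    using k(2) norm_triangle_ineq2[of p k] by (simp add: dist_norm)
  define k' where "k' = (R / norm p) *\<^sub>R p"
  have k'in: "k' \<in> cball 0 R" using np assms by (simp add: k'_def)
  have "p - k' = (1 - R / norm p) *\<^sub>R p" by (simp add: k'_def algebra_simps)
  then have "dist p k' = \<bar>1 - R / norm p\<bar> * norm p"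
    by (simp add: dist_norm)
  also have "\<dots> = (1 - R / norm p) * norm p"
  proof -
    have "norm p > 0" using np assms by linarith
    then have "R / norm p < 1" using np by (simp add: divide_less_eq)
    then show ?thesis by simp
  qed
  also have "\<dots> = norm p - R"
  proof -
    have "norm p \<noteq> 0" using np assms by linarith
    then show ?thesis by (simp add: field_simps)
  qed
  finally have "dist p k' = norm p - R" .
  then have "infdist p (cball 0 R) \<le> norm p - R"
    using infdist_le[OF k'in, of p] by simp
  with lo np show ?thesis by simp
qed

theorem lemma2:
  fixes f :: "real ^ 'n \<Rightarrow> real" and R :: real
  assumes "R > 0"
    and "continuous_on UNIV f"
    and "\<And>x. f x > 0"
    and "\<And>x. norm x ^ 2 + (f x) ^ 2 > R ^ 2"
  shows "\<forall>x :: real ^ 'n. \<exists>!y :: real.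
           infdist (x, y) (cball (0 :: (real ^ 'n) \<times> real) R)
             = infdist (x, y) {(u, v). f u \<le> v}"
proof
  fix x :: "real ^ 'n"
  define L where "L = {(u, v). f u \<le> v}"
  have Lcl: "closed L"
  proof -
    have "continuous_on UNIV (\<lambda>p::(real^'n)\<times>real. f (fst p))"
      by (rule continuous_on_compose2[OF assms(2)]) (auto intro: continuous_intros)
    then have "closed {p::(real^'n)\<times>real. f (fst p) \<le> snd p}"
      by (intro closed_Collect_le) (auto intro: continuous_intros)
    moreover have "{p::(real^'n)\<times>real. f (fst p) \<le> snd p} = L"
      by (auto simp: L_def)
    ultimately show ?thesis by simp
  qed
  have Lne: "L \<noteq> {}" by (auto simp: L_def)
  define N where "N y = sqrt (norm x ^ 2 + y ^ 2)" for y
  have normN: "norm (x, y) = N y" for y by (simp add: norm_Pair N_def)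
  define K where "K y = infdist (x, y) (cball (0 :: (real ^ 'n) \<times> real) R)" for y
  define D where "D y = infdist (x, y) L" for y
  have Kform: "K y = max 0 (N y - R)" for y
    unfolding K_def using infdist_cball0[OF assms(1), of "(x,y)"] normN by simp
  have out: "N y > R" if "K y = D y" for y
  proof (rule ccontr)
    assume "\<not> N y > R"
    then have "K y = 0" using Kform by simp
    then have "D y = 0" using that by simp
    then have "(x, y) \<in> L" using in_closed_iff_infdist_zero[OF Lcl Lne] D_def by simp
    then have "f x \<le> y" by (simp add: L_def)
    moreover have "f x > 0" using assms(3) .
    ultimately have "f x ^ 2 \<le> y ^ 2" by (simp add: power_mono)
    then have "norm x ^ 2 + y ^ 2 > R ^ 2" using assms(4)[of x] by simp
    then have "N y > R" unfolding N_def using assms(1)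
      by (metis abs_of_pos real_less_rsqrt)
    with \<open>\<not> N y > R\<close> show False by simp
  qed
  have Nsq: "(N y)^2 = norm x ^ 2 + y ^ 2" for y
    unfolding N_def by (simp add: add_nonneg_nonneg)
  have Nnn: "N y \<ge> 0" for y unfolding N_def by simp
  have Dsq: "D y = sqrt ((dist x u)^2 + (y - v)^2)" if "D y = dist (x, y) (u, v)" for y u v
    using that by (simp add: dist_Pair_Pair dist_real_def)
  have Lmem: "(u, v) \<in> L \<longleftrightarrow> f u \<le> v" for u v by (simp add: L_def)
  have uniq: "\<not> (K y1 = D y1 \<and> K y2 = D y2 \<and> y1 < y2)" for y1 y2
  proof
    assume H: "K y1 = D y1 \<and> K y2 = D y2 \<and> y1 < y2"
    then have z1: "K y1 = D y1" and z2: "K y2 = D y2" and lt: "y1 < y2" by auto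
    have c1: "D y1 = N y1 - R" using out[OF z1] Kform[of y1] z1 by simp
    have c2: "D y2 = N y2 - R" using out[OF z2] Kform[of y2] z2 by simp
    obtain q where q: "q \<in> L" "D y1 = dist (x, y1) q"
      using infdist_attains_inf[OF Lcl Lne, of "(x, y1)"] D_def by metis
    obtain u v where quv: "q = (u, v)" by (cases q)
    have fuv: "f u \<le> v" using q(1) quv Lmem by simp
    have vpos: "v > 0" using fuv assms(3)[of u] by simp
    define d where "d = dist x u"
    have e1: "D y1 = sqrt (d^2 + (y1 - v)^2)" using Dsq q(2) quv d_def by simp
    have "(u, v + (y2 - y1)) \<in> L" using Lmem fuv lt by simp
    then have "D y2 \<le> dist (x, y2) (u, v + (y2 - y1))"
      unfolding D_def by (rule infdist_le)
    also have "\<dots> = sqrt (d^2 + (y1 - v)^2)"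
      by (simp add: dist_Pair_Pair dist_real_def d_def algebra_simps)
    finally have "D y2 \<le> D y1" using e1 by simp
    then have ab: "N y2 \<le> N y1" using c1 c2 by simp
    have "D y2 \<le> dist (x, y2) (u, v)"
      unfolding D_def using q(1) quv by (intro infdist_le) simp
    also have "\<dots> = sqrt (d^2 + (y2 - v)^2)"
      by (simp add: dist_Pair_Pair dist_real_def d_def)
    finally have "N y2 - R \<le> sqrt (d^2 + (y2 - v)^2)" using c2 by simp
    moreover have "N y2 - R \<ge> 0" using out[OF z2] by simp
    ultimately have "(N y2 - R)^2 \<le> (sqrt (d^2 + (y2 - v)^2))^2"
      by (rule power_mono)
    then have s2: "(N y2 - R)^2 \<le> d^2 + (y2 - v)^2" by simp
    have s1: "(N y1 - R)^2 = d^2 + (y1 - v)^2"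
    proof -
      have "N y1 - R = sqrt (d^2 + (y1 - v)^2)" using c1 e1 by simp
      then show ?thesis by simp
    qed
    from s1 s2 have "(N y2 - R)^2 - (N y1 - R)^2 \<le> (y2 - v)^2 - (y1 - v)^2" by linarith
    then have "(N y2)^2 - (N y1)^2 - 2 * R * (N y2 - N y1) \<le> y2^2 - y1^2 - 2 * v * (y2 - y1)"
      by (simp add: power2_eq_square algebra_simps)
    then have "- 2 * R * (N y2 - N y1) \<le> - 2 * v * (y2 - y1)"
      using Nsq[of y1] Nsq[of y2] by simp
    then have "R * (N y2 - N y1) \<ge> v * (y2 - y1)" by simp
    moreover have "v * (y2 - y1) > 0" using vpos lt by simp
    moreover have "R * (N y2 - N y1) \<le> 0" using ab assms(1)
      by (simp add: mult_nonneg_nonpos)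
    ultimately show False by simp
  qed
  have ex: "\<exists>y. K y = D y"
  proof -
    define T where "T = norm x ^ 2 / R + 1"
    have Tpos: "T > 0" unfolding T_def using assms(1) by (simp add: add_nonneg_pos)
    have "2 * T * R = 2 * norm x ^ 2 + 2 * R"
      unfolding T_def using assms(1) by (simp add: field_simps)
    then have "norm x ^ 2 < 2 * T * R"
      using assms(1) zero_le_power2[of "norm x"] by linarith
    moreover have "(T + R)^2 = T^2 + 2 * T * R + R^2"
      by (simp add: power2_eq_square algebra_simps)
    moreover have "R^2 > 0" using assms(1) by simp
    moreover have "(-T)^2 = T^2" by simp
    ultimately have "norm x ^ 2 + (-T)^2 < (T + R)^2"
      by linarith
    then have "N (-T) < sqrt ((T + R)^2)"
      unfolding N_def by (rule real_sqrt_less_mono)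
    then have "N (-T) < T + R" using Tpos assms(1) by simp
    then have Ka: "K (-T) < T" using Kform Tpos by simp
    obtain q where q: "q \<in> L" "D (-T) = dist (x, -T) q"
      using infdist_attains_inf[OF Lcl Lne, of "(x, -T)"] D_def by metis
    obtain u v where quv: "q = (u, v)" by (cases q)
    have vpos: "v > 0" using q(1) quv Lmem assms(3)[of u] by fastforce
    have "D (-T) = sqrt ((dist x u)^2 + (-T - v)^2)" using Dsq q(2) quv by simp
    also have "\<dots> \<ge> sqrt ((-T - v)^2)" by (intro real_sqrt_le_mono) simp
    finally have "D (-T) \<ge> \<bar>-T - v\<bar>" by simp
    then have Da: "D (-T) \<ge> T" using vpos Tpos by simp
    define b where "b = max (f x) (R + 1)"
    have "(x, b) \<in> L" using Lmem b_def by simp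
    then have Db: "D b = 0" unfolding D_def by simp
    have "N b \<ge> sqrt (b^2)" unfolding N_def by (intro real_sqrt_le_mono) simp
    then have "N b \<ge> b" using b_def assms(1) by simp
    then have Kb: "K b > 0" using Kform b_def by simp
    have cont: "continuous_on {-T..b} (\<lambda>y. K y - D y)"
      unfolding K_def D_def by (intro continuous_intros)
    have "\<exists>y. -T \<le> y \<and> y \<le> b \<and> K y - D y = 0"
      by (rule IVT'[OF _ _ _ cont]) (use Ka Da Kb Db Tpos b_def assms(1) in auto)
    then show ?thesis by auto
  qed
  have "\<exists>!y. K y = D y"
  proof -
    obtain y where y: "K y = D y" using ex by blast
    show ?thesis
    proof (rule ex1I[of _ y])
      show "K y = D y" by (rule y)
      fix y' assume y': "K y' = D y'"
      show "y' = y"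
      proof (rule linorder_cases[of y' y])
        assume "y' < y" then show ?thesis using uniq[of y' y] y y' by simp
      next
        assume "y' > y" then show ?thesis using uniq[of y y'] y y' by simp
      qed simp
    qed
  qed
  then show "\<exists>!y. infdist (x, y) (cball (0 :: (real ^ 'n) \<times> real) R)
             = infdist (x, y) {(u, v). f u \<le> v}"
    unfolding K_def D_def L_def .
qed

end
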